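(* In a naturally labeled rooted tree with vertex set $\{0,\dots,n\}$, for each $d\ge0$ the set of labels of vertices at distance $d$ from the root forms an interval of consecutive integers in $\{0,\dots,n\}$.
   Context: A rooted tree with vertex set $\{0,\dots,n\}$ is naturally labeled if labels increase towards the root (each vertex has a smaller label than its parent) and, for each $i$, all children of $i$ have labels smaller than all children of $i+1$. *)

theory Defs
  imports Main
begin

text \<open>A rooted tree on the vertex set {0..n} whose labels increase towards the root
  is encoded by its parent function p: every non-root vertex i < n has parent p i
  with i < p i \<le> n (the root is necessarily n; the value p n is irrelevant).\<close>

definition naturally_labeled :: "nat \<Rightarrow> (nat \<Rightarrow> nat) \<Rightarrow> bool" where
  "naturally_labeled n p \<longleftrightarrow>
     (\<forall>i<n. i < p i \<and> p i \<le> n) \<and>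
     (\<forall>j<n. \<forall>k<n. p j < p k \<longrightarrow> j < k)"

definition dist_root :: "nat \<Rightarrow> (nat \<Rightarrow> nat) \<Rightarrow> nat \<Rightarrow> nat \<Rightarrow> bool" where
  "dist_root n p i d \<longleftrightarrow> (p ^^ d) i = n \<and> (\<forall>e<d. (p ^^ e) i \<noteq> n)"

end

theory Submission
  imports Defs
begin

lemma reach:
  assumes nl: "naturally_labeled n p"
  shows "i \<le> n \<Longrightarrow> \<exists>d. (p ^^ d) i = n"
proof (induction "n - i" arbitrary: i rule: less_induct)
  case less
  show ?case
  proof (cases "i = n")
    case True then show ?thesis by (rule_tac x=0 in exI) simp
  next
    case False
    then have "i < p i" "p i \<le> n" using nl less.prems unfolding naturally_labeled_def by auto
    moreover have "n - p i < n - i" using \<open>i < p i\<close> \<open>p i \<le> n\<close> by simp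
    ultimately obtain d where "(p ^^ d) (p i) = n" using less.hyps[of "p i"] by blast
    then show ?thesis by (rule_tac x="Suc d" in exI) (simp only: funpow_Suc_right o_apply)
  qed
qed

definition dep :: "nat \<Rightarrow> (nat \<Rightarrow> nat) \<Rightarrow> nat \<Rightarrow> nat" where
  "dep n p i = (LEAST d. (p ^^ d) i = n)"

lemma dist_iff:
  assumes nl: "naturally_labeled n p" and "i \<le> n"
  shows "dist_root n p i d \<longleftrightarrow> d = dep n p i"
proof -
  obtain d0 where d0: "(p ^^ d0) i = n" using reach[OF nl assms(2)] by blast
  have A: "(p ^^ dep n p i) i = n" unfolding dep_def using d0 by (rule LeastI)
  have B: "\<And>e. e < dep n p i \<Longrightarrow> (p ^^ e) i \<noteq> n" unfolding dep_def using not_less_Least by blast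
  show ?thesis
  proof
    assume "dist_root n p i d"
    then have d1: "(p ^^ d) i = n" and d2: "\<forall>e<d. (p ^^ e) i \<noteq> n" unfolding dist_root_def by auto
    show "d = dep n p i"
    proof (rule linorder_cases[of d "dep n p i"])
      assume "d < dep n p i" then show ?thesis using B d1 by blast
    next
      assume "dep n p i < d" then show ?thesis using A d2 by blast
    qed
  qed (use A B in \<open>auto simp: dist_root_def\<close>)
qed

lemma dep_n: "dep n p n = 0"
  unfolding dep_def by simp

lemma dep_step:
  assumes nl: "naturally_labeled n p" and "i < n"
  shows "dep n p i = Suc (dep n p (p i))"
proof -
  have pi: "i < p i" "p i \<le> n" using nl assms(2) unfolding naturally_labeled_def by auto
  have "dist_root n p (p i) (dep n p (p i))" using dist_iff[OF nl pi(2)] by simp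
  then have h1: "(p ^^ dep n p (p i)) (p i) = n" and h2: "\<forall>e<dep n p (p i). (p ^^ e) (p i) \<noteq> n"
    unfolding dist_root_def by auto
  have "dist_root n p i (Suc (dep n p (p i)))"
    unfolding dist_root_def
  proof (intro conjI allI impI)
    show "(p ^^ Suc (dep n p (p i))) i = n" using h1 by (simp only: funpow_Suc_right o_apply)
  next
    fix e assume e: "e < Suc (dep n p (p i))"
    show "(p ^^ e) i \<noteq> n"
    proof (cases e)
      case 0 then show ?thesis using assms(2) by simp
    next
      case (Suc e')
      then have "(p ^^ e) i = (p ^^ e') (p i)" by (simp only: funpow_Suc_right o_apply)
      then show ?thesis using h2 e Suc by simp
    qed
  qed
  then show ?thesis using dist_iff[OF nl] assms(2) by simp
qed

lemma dep_mono:
  assumes nl: "naturally_labeled n p"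
  shows "i \<le> j \<Longrightarrow> j \<le> n \<Longrightarrow> dep n p j \<le> dep n p i"
proof (induction "n - i" arbitrary: i j rule: less_induct)
  case less
  show ?case
  proof (cases "j = n")
    case True then show ?thesis by (simp add: dep_n)
  next
    case False
    show ?thesis
    proof (cases "i = j")
      case True then show ?thesis by simp
    next
      case False
      have jn: "j < n" using \<open>j \<noteq> n\<close> less.prems by simp
      have ij: "i < j" using False less.prems by simp
      have "p i \<le> p j"
      proof (rule ccontr)
        assume "\<not> p i \<le> p j"
        then have "p j < p i" by simp
        then have "j < i" using nl jn ij unfolding naturally_labeled_def by auto
        then show False using ij by simp
      qed
      moreover have "i < p i" "p j \<le> n" using nl jn ij unfolding naturally_labeled_def by auto
      ultimately have "dep n p (p j) \<le> dep n p (p i)" using less.hyps[of "p i" "p j"] by auto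
      then show ?thesis using dep_step[OF nl jn] dep_step[OF nl] ij jn by simp
    qed
  qed
qed

theorem lemma3p7:
  fixes n d :: nat and p :: "nat \<Rightarrow> nat"
  assumes "naturally_labeled n p"
  shows "\<exists>a b. {i. i \<le> n \<and> dist_root n p i d} = {a..b}"
proof -
  let ?S = "{i. i \<le> n \<and> dist_root n p i d}"
  have S: "?S = {i. i \<le> n \<and> dep n p i = d}" using dist_iff[OF assms] by auto
  have fin: "finite ?S" by simp
  show ?thesis
  proof (cases "?S = {}")
    case True then show ?thesis by (rule_tac x=1 in exI, rule_tac x=0 in exI) simp
  next
    case False
    have a: "Min ?S \<in> ?S" and b: "Max ?S \<in> ?S" using fin False by (rule Min_in, rule Max_in)
    have "?S = {Min ?S..Max ?S}"
    proof
      show "?S \<subseteq> {Min ?S..Max ?S}" using fin by auto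
    next
      show "{Min ?S..Max ?S} \<subseteq> ?S"
      proof
        fix k assume k: "k \<in> {Min ?S..Max ?S}"
        have "k \<le> n" using k b by auto
        moreover have "dep n p k \<le> d" using dep_mono[OF assms, of "Min ?S" k] a k \<open>k \<le> n\<close> S by auto
        moreover have "d \<le> dep n p k" using dep_mono[OF assms, of k "Max ?S"] b k S by auto
        ultimately show "k \<in> ?S" using S by auto
      qed
    qed
    then show ?thesis by blast
  qed
qed

end
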